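(* The variety of Gödel algebras (equivalently, Gödel–Dummett logic, with formulas identified up to logical equivalence) has unitary e-generalization type.
   Context: Gödel algebras are the algebras in the language $(\wedge,\vee,\to,0,1)$ forming the subvariety of Heyting algebras generated by totally ordered Heyting algebras; they are the equivalent algebraic semantics of Gödel–Dummett logic. For a variety $\mathsf V$: a symbolic e-generalization problem is a finite multiset $\{t_1,\dots,t_m\}$ of terms (elements of a free algebra $\mathbf F_{\mathsf V}(X)$, $X$ finite); a solution is a term $s\in\mathbf F_{\mathsf V}(Y)$ ($Y$ the variables of $s$) with substitutions (homomorphisms between free algebras) $\sigma_k$ such that $\sigma_k(s)=t_k$ for all $k$; $s\preceq u$ iff $\sigma(u)=s$ for some substitution $\sigma$. A problem has unitary type if its poset of solutions modulo $\preceq$-equivalence has a minimal complete set (pairwise incomparable elements such that every solution lies above one of them) of cardinality 1. A variety has unitary e-generalization type if every problem has unitary type. *)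

theory Defs
  imports Complex_Main
begin

datatype 'v gterm =
    GVar 'v
  | GBot
  | GTop
  | GMeet "'v gterm" "'v gterm"
  | GJoin "'v gterm" "'v gterm"
  | GImp  "'v gterm" "'v gterm"

text \<open>Totally ordered Heyting algebras (Goedel chains) are represented by a carrier
  C (a set of reals, with the real order) having a least element b and greatest
  element t; on a chain the Heyting operations are forced:
  meet = min, join = max, x imp y = (if x <= y then t else y).\<close>

definition goedel_chain :: "real set \<Rightarrow> real \<Rightarrow> real \<Rightarrow> bool" where
  "goedel_chain C b t \<longleftrightarrow> b \<in> C \<and> t \<in> C \<and> (\<forall>x\<in>C. b \<le> x \<and> x \<le> t)"

fun geval :: "real \<Rightarrow> real \<Rightarrow> ('v \<Rightarrow> real) \<Rightarrow> 'v gterm \<Rightarrow> real" where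
  "geval b t v (GVar x) = v x"
| "geval b t v GBot = b"
| "geval b t v GTop = t"
| "geval b t v (GMeet p q) = min (geval b t v p) (geval b t v q)"
| "geval b t v (GJoin p q) = max (geval b t v p) (geval b t v q)"
| "geval b t v (GImp p q) =
     (if geval b t v p \<le> geval b t v q then t else geval b t v q)"

text \<open>Equality in the free Goedel algebra: the equation holds in every totally
  ordered Heyting algebra (these generate the variety, so they have the same
  equational theory as the variety).\<close>

definition gequiv :: "nat gterm \<Rightarrow> nat gterm \<Rightarrow> bool" (infix "\<approx>\<^sub>G" 50) where
  "p \<approx>\<^sub>G q \<longleftrightarrow>
     (\<forall>C b t v. goedel_chain C b t \<longrightarrow> (\<forall>x. v x \<in> C) \<longrightarrow> geval b t v p = geval b t v q)"

fun gsubst :: "(nat \<Rightarrow> nat gterm) \<Rightarrow> nat gterm \<Rightarrow> nat gterm" where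
  "gsubst \<sigma> (GVar x) = \<sigma> x"
| "gsubst \<sigma> GBot = GBot"
| "gsubst \<sigma> GTop = GTop"
| "gsubst \<sigma> (GMeet p q) = GMeet (gsubst \<sigma> p) (gsubst \<sigma> q)"
| "gsubst \<sigma> (GJoin p q) = GJoin (gsubst \<sigma> p) (gsubst \<sigma> q)"
| "gsubst \<sigma> (GImp p q) = GImp (gsubst \<sigma> p) (gsubst \<sigma> q)"

definition gen_le :: "nat gterm \<Rightarrow> nat gterm \<Rightarrow> bool" where
  "gen_le s u \<longleftrightarrow> (\<exists>\<sigma>. gsubst \<sigma> u \<approx>\<^sub>G s)"

definition gen_solution :: "nat gterm list \<Rightarrow> nat gterm \<Rightarrow> bool" where
  "gen_solution ts s \<longleftrightarrow> (\<forall>k < length ts. \<exists>\<sigma>. gsubst \<sigma> s \<approx>\<^sub>G ts ! k)"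

definition minimal_complete_set :: "nat gterm list \<Rightarrow> nat gterm set \<Rightarrow> bool" where
  "minimal_complete_set ts M \<longleftrightarrow>
     (\<forall>m\<in>M. gen_solution ts m) \<and>
     (\<forall>u. gen_solution ts u \<longrightarrow> (\<exists>m\<in>M. gen_le m u)) \<and>
     (\<forall>m\<in>M. \<forall>m'\<in>M. m \<noteq> m' \<longrightarrow> \<not> gen_le m m')"

definition unitary_type :: "nat gterm list \<Rightarrow> bool" where
  "unitary_type ts \<longleftrightarrow> (\<exists>M. minimal_complete_set ts M \<and> card M = 1)"

end

theory Submission
  imports Defs
begin

definition gneg :: "nat gterm \<Rightarrow> nat gterm" where
  "gneg p = GImp p GBot"

definition gite :: "nat gterm \<Rightarrow> nat gterm \<Rightarrow> nat gterm \<Rightarrow> nat gterm" where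
  "gite p a c = GMeet (GImp (gneg (gneg p)) a) (GImp (gneg p) c)"

fun sel :: "nat \<Rightarrow> nat gterm list \<Rightarrow> nat gterm" where
  "sel N [] = GBot"
| "sel N [a] = a"
| "sel N (a # c # rest) = gite (GVar N) a (sel (Suc N) (c # rest))"

fun pick :: "(nat \<Rightarrow> real) \<Rightarrow> real \<Rightarrow> nat \<Rightarrow> nat \<Rightarrow> nat" where
  "pick v b N 0 = 0"
| "pick v b N (Suc 0) = 0"
| "pick v b N (Suc (Suc n)) = (if v N > b then 0 else Suc (pick v b (Suc N) (Suc n)))"

fun maxv :: "nat gterm \<Rightarrow> nat" where
  "maxv (GVar x) = x"
| "maxv GBot = 0"
| "maxv GTop = 0"
| "maxv (GMeet p q) = max (maxv p) (maxv q)"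
| "maxv (GJoin p q) = max (maxv p) (maxv q)"
| "maxv (GImp p q) = max (maxv p) (maxv q)"

lemma geval_in:
  assumes "goedel_chain C b t" "\<forall>x. v x \<in> C"
  shows "geval b t v p \<in> C"
  using assms
  by (induction p) (auto simp: goedel_chain_def min_def max_def)

lemma geval_subst:
  "geval b t v (gsubst \<sigma> p) = geval b t (\<lambda>x. geval b t v (\<sigma> x)) p"
  by (induction p) auto

lemma geval_agree:
  "(\<forall>x \<le> maxv p. v x = v' x) \<Longrightarrow> geval b t v p = geval b t v' p"
  by (induction p) auto

lemma gite_eval:
  assumes "goedel_chain C b t" "\<forall>x. v x \<in> C"
  shows "geval b t v (gite p a c) =
         (if geval b t v p > b then geval b t v a else geval b t v c)"
proof -
  have hp: "b \<le> geval b t v p" "geval b t v p \<le> t"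
    using geval_in[OF assms, of p] assms(1) by (auto simp: goedel_chain_def)
  have ha: "b \<le> geval b t v a" "geval b t v a \<le> t"
    using geval_in[OF assms, of a] assms(1) by (auto simp: goedel_chain_def)
  have hc: "b \<le> geval b t v c" "geval b t v c \<le> t"
    using geval_in[OF assms, of c] assms(1) by (auto simp: goedel_chain_def)
  show ?thesis
  proof (cases "geval b t v p > b")
    case True
    then have "geval b t v (gneg p) = b" by (simp add: gneg_def)
    then have "geval b t v (gneg (gneg p)) = t" by (simp add: gneg_def)
    with \<open>geval b t v (gneg p) = b\<close> show ?thesis using True ha hc
      by (simp add: gite_def min_def)
  next
    case False
    then have "geval b t v (gneg p) = t" using hp by (simp add: gneg_def)
    then have "geval b t v (gneg (gneg p)) = b" using hp False
      by (simp add: gneg_def)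
    with \<open>geval b t v (gneg p) = t\<close> show ?thesis using False ha hc hp
      by (simp add: gite_def min_def)
  qed
qed

lemma sel_eval:
  assumes "goedel_chain C b t" "\<forall>x. v x \<in> C" "xs \<noteq> []"
  shows "pick v b N (length xs) < length xs \<and>
         geval b t v (sel N xs) = geval b t v (xs ! pick v b N (length xs))"
  using assms(3)
proof (induction N xs rule: sel.induct)
  case (3 N a c rest)
  show ?case
    using "3.IH" gite_eval[OF assms(1,2)] by auto
qed auto

lemma pick_k:
  assumes "\<forall>i<k. v (N + i) = b" "v (N + k) > b" "k < n"
  shows "pick v b N n = k"
  using assms
proof (induction k arbitrary: N n)
  case 0
  then obtain m where m: "n = Suc m" using gr0_implies_Suc by blast
  show ?case
  proof (cases m)
    case 0
    then show ?thesis using m by simp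
  next
    case (Suc m')
    then show ?thesis using m "0.prems"(2) by simp
  qed
next
  case (Suc k)
  have h1: "\<forall>i<k. v (Suc N + i) = b" using Suc.prems(1) by auto
  have h2: "v (Suc N + k) > b" using Suc.prems(2) by simp
  have "n \<ge> Suc (Suc k)" using Suc.prems(3) by simp
  then obtain m where m: "n = Suc (Suc m)" and km: "k < Suc m"
    by (metis Suc_le_D Suc_le_mono le_imp_less_Suc)
  have "pick v b (Suc N) (Suc m) = k" using Suc.IH[OF h1 h2 km] .
  moreover have "v (N + 0) = b" using Suc.prems(1) by blast
  ultimately show ?case using m by simp
qed

lemma maxv_le_sum: "p \<in> set ts \<Longrightarrow> maxv p \<le> sum_list (map maxv ts)"
  by (induction ts) auto

theorem theorem5p3:
  fixes ts :: "nat gterm list"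
  assumes "ts \<noteq> []"
  shows "unitary_type ts"
proof -
  define N where "N = Suc (sum_list (map maxv ts))"
  define n where "n = length ts"
  have n0: "n > 0" using assms n_def by simp
  have small: "\<And>j x. j < n \<Longrightarrow> x \<le> maxv (ts ! j) \<Longrightarrow> x < N"
  proof -
    fix j x assume "j < n" "x \<le> maxv (ts ! j)"
    then have "maxv (ts ! j) \<le> sum_list (map maxv ts)"
      using maxv_le_sum n_def by simp
    then show "x < N" using \<open>x \<le> maxv (ts ! j)\<close> N_def by simp
  qed
  define m where "m = sel N ts"
  have sol: "gen_solution ts m"
    unfolding gen_solution_def
  proof (intro allI impI)
    fix k assume k: "k < length ts"
    define \<sigma> where "\<sigma> x = (if N \<le> x \<and> x < N + k then GBot
                           else if x = N + k then GTop else GVar x)" for x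
    have "gsubst \<sigma> m \<approx>\<^sub>G ts ! k"
      unfolding gequiv_def
    proof (intro allI impI)
      fix C b t and v :: "nat \<Rightarrow> real" assume ch: "goedel_chain C b t" and v: "\<forall>x. v x \<in> C"
      define v' where "v' = (\<lambda>x. geval b t v (\<sigma> x))"
      have v': "\<forall>x. v' x \<in> C" using geval_in[OF ch v] v'_def by auto
      have "geval b t v (gsubst \<sigma> m) = geval b t v' m"
        by (simp add: geval_subst v'_def)
      also have "\<dots> = geval b t v' (ts ! pick v' b N n)"
        using sel_eval[OF ch v' assms] m_def n_def by simp
      also have "\<dots> = geval b t v (ts ! k)"
      proof (cases "b = t")
        case True
        have "geval b t w p = b" if w: "\<forall>x. w x \<in> C" for w p
        proof -
          have "geval b t w p \<in> C" using geval_in[OF ch w] .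
          then show ?thesis using ch True unfolding goedel_chain_def
            by (meson order_antisym)
        qed
        then show ?thesis using v v' by metis
      next
        case False
        then have bt: "b < t" using ch unfolding goedel_chain_def by force
        have "pick v' b N n = k"
          by (rule pick_k) (use bt k n_def in \<open>auto simp: v'_def \<sigma>_def\<close>)
        moreover have "geval b t v' (ts ! k) = geval b t v (ts ! k)"
        proof (rule geval_agree, intro allI impI)
          fix x assume "x \<le> maxv (ts ! k)"
          then have "x < N" using small k n_def by simp
          then show "v' x = v x" by (simp add: v'_def \<sigma>_def)
        qed
        ultimately show ?thesis by simp
      qed
      finally show "geval b t v (gsubst \<sigma> m) = geval b t v (ts ! k)" .
    qed
    then show "\<exists>\<sigma>. gsubst \<sigma> m \<approx>\<^sub>G ts ! k" by blast
  qed
  have compl: "gen_le m u" if u: "gen_solution ts u" for u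
  proof -
    obtain S where S: "\<And>k. k < n \<Longrightarrow> gsubst (S k) u \<approx>\<^sub>G ts ! k"
      using u unfolding gen_solution_def n_def by metis
    define \<tau> where "\<tau> y = sel N (map (\<lambda>k. S k y) [0..<n])" for y
    have "gsubst \<tau> u \<approx>\<^sub>G m"
      unfolding gequiv_def
    proof (intro allI impI)
      fix C b t and v :: "nat \<Rightarrow> real" assume ch: "goedel_chain C b t" and v: "\<forall>x. v x \<in> C"
      define j where "j = pick v b N n"
      have ne: "map (\<lambda>k. S k y) [0..<n] \<noteq> []" for y using n0 by simp
      have j: "j < n" and tj: "\<And>y. geval b t v (\<tau> y) = geval b t v (S j y)"
        using sel_eval[OF ch v ne] n0 unfolding \<tau>_def j_def by auto
      have "geval b t v (gsubst \<tau> u) = geval b t (\<lambda>y. geval b t v (S j y)) u"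
        by (simp add: geval_subst tj)
      also have "\<dots> = geval b t v (gsubst (S j) u)"
        by (simp add: geval_subst)
      also have "\<dots> = geval b t v (ts ! j)"
        using S[OF j] ch v unfolding gequiv_def by blast
      also have "\<dots> = geval b t v m"
        using sel_eval[OF ch v assms] m_def n_def j_def by simp
      finally show "geval b t v (gsubst \<tau> u) = geval b t v m" .
    qed
    then show ?thesis unfolding gen_le_def by blast
  qed
  have "minimal_complete_set ts {m}"
    unfolding minimal_complete_set_def using sol compl by auto
  then show ?thesis unfolding unitary_type_def by (intro exI[of _ "{m}"]) simp
qed

end
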